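(* Let $X=(X_1,\ldots,X_p)^\top$ follow the linear structural equation model $$X_j = \Psi_j + \sum_{k \in \mathrm{PA}(j)} \theta_{j,k} X_k, \qquad j=1,\ldots,p,$$ as described in the context. Fix $j$, a function $f:\mathbb{R}\to\mathbb{R}$, and assume $\beta^{f,j} := E(XX^\top)^{-1}E\{Xf(X_j)\}$ exists. Let $k\in\mathrm{AN}(j)$ with $\mathrm{CH}^{\to j}(k)=\{l\}$. If $\Psi_l$ has the same distribution as $\theta_{l,k}\Psi_k$, then $\beta^{f,j}_k=0$.
   Context: In the model, $\Psi_1,\ldots,\Psi_p$ are independent, centered random variables with $0<\mathrm{var}(\Psi_j)=\sigma_j^2<\infty$ for all $j$, so that the covariance matrix of $X$ exists and has full rank. The parent sets $\mathrm{PA}(j)$ are those of a directed acyclic graph (DAG) on $\{1,\ldots,p\}$ with edges $k\to j$ for $k\in\mathrm{PA}(j)$, and $\theta_{j,k}$ are real coefficients. $\mathrm{AN}(j)$ and $\mathrm{CH}(k)$ denote the ancestors of $j$ and the children of $k$ in this DAG, and $\mathrm{CH}^{\to j}(k) := \mathrm{CH}(k)\cap(\mathrm{AN}(j)\cup\{j\})$. *)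

theory Defs
  imports "HOL-Probability.Probability"
begin

definition dag_edges :: "('n \<Rightarrow> 'n set) \<Rightarrow> ('n \<times> 'n) set" where
  "dag_edges PA = {(k, j). k \<in> PA j}"

definition ancestors :: "('n \<Rightarrow> 'n set) \<Rightarrow> 'n \<Rightarrow> 'n set" where
  "ancestors PA j = {k. (k, j) \<in> (dag_edges PA)\<^sup>+}"

definition children :: "('n \<Rightarrow> 'n set) \<Rightarrow> 'n \<Rightarrow> 'n set" where
  "children PA k = {l. k \<in> PA l}"

definition children_to :: "('n \<Rightarrow> 'n set) \<Rightarrow> 'n \<Rightarrow> 'n \<Rightarrow> 'n set" where
  "children_to PA j k = children PA k \<inter> (ancestors PA j \<union> {j})"

definition second_moment :: "'a measure \<Rightarrow> ('n::finite \<Rightarrow> 'a \<Rightarrow> real) \<Rightarrow> real^'n^'n" where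
  "second_moment M X = (\<chi> i k. integral\<^sup>L M (\<lambda>\<omega>. X i \<omega> * X k \<omega>))"

definition beta_coef :: "'a measure \<Rightarrow> ('n::finite \<Rightarrow> 'a \<Rightarrow> real) \<Rightarrow> (real \<Rightarrow> real) \<Rightarrow> 'n \<Rightarrow> real^'n" where
  "beta_coef M X f j = matrix_inv (second_moment M X)
      *v (\<chi> i. integral\<^sup>L M (\<lambda>\<omega>. X i \<omega> * f (X j \<omega>)))"

end

theory Submission
  imports Defs
begin



locale sem_setup =
  fixes M :: "'a measure"
    and Psi X :: "'n::finite \<Rightarrow> 'a \<Rightarrow> real"
    and PA :: "'n \<Rightarrow> 'n set"
    and theta :: "'n \<Rightarrow> 'n \<Rightarrow> real"
    and f :: "real \<Rightarrow> real"
    and j k l :: 'n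
  assumes ps: "prob_space M"
    and rv: "\<And>i. Psi i \<in> borel_measurable M"
    and indep: "prob_space.indep_vars M (\<lambda>_. borel) Psi UNIV"
    and centered: "\<And>i. integrable M (Psi i) \<and> integral\<^sup>L M (Psi i) = 0"
    and finvar: "\<And>i. integrable M (\<lambda>\<omega>. (Psi i \<omega>)\<^sup>2)"
    and posvar: "\<And>i. prob_space.variance M (Psi i) > 0"
    and dag: "acyclic (dag_edges PA)"
    and sem: "\<And>i \<omega>. \<omega> \<in> space M \<Longrightarrow>
               X i \<omega> = Psi i \<omega> + (\<Sum>m\<in>PA i. theta i m * X m \<omega>)"
    and f_meas: "f \<in> borel_measurable borel"
    and beta_exists: "\<And>i. integrable M (\<lambda>\<omega>. X i \<omega> * f (X j \<omega>))"
    and k_anc: "k \<in> ancestors PA j"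
    and ch: "children_to PA j k = {l}"
    and same_dist: "distr M borel (Psi l) = distr M borel (\<lambda>\<omega>. theta l k * Psi k \<omega>)"
begin

abbreviation "E \<equiv> dag_edges PA"

lemma E_iff: "(m, r) \<in> E \<longleftrightarrow> m \<in> PA r"
  by (simp add: dag_edges_def)

lemma wfE: "wf E"
  by (rule finite_acyclic_wf[OF _ dag]) simp

lemma wfE': "wf (E\<inverse>)"
  by (rule finite_acyclic_wf_converse[OF _ dag]) simp

lemma noloop: "(x, x) \<notin> E\<^sup>+"
  using dag by (simp add: acyclic_def)

lemma kl: "k \<in> PA l" and l_anc: "l \<in> ancestors PA j \<or> l = j"
  and l_uniq: "\<And>i. k \<in> PA i \<Longrightarrow> i \<in> ancestors PA j \<or> i = j \<Longrightarrow> i = l"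
  using ch by (auto simp: children_to_def children_def set_eq_iff)

lemma k_ne_l: "k \<noteq> l"
  using kl noloop E_iff by blast

definition Prep :: "'n \<Rightarrow> ('n \<Rightarrow> real) \<Rightarrow> bool" where
  "Prep r b \<longleftrightarrow> (\<forall>\<omega>\<in>space M. X r \<omega> = (\<Sum>s\<in>UNIV. b s * Psi s \<omega>))
     \<and> (\<forall>s. b s \<noteq> 0 \<longrightarrow> s = r \<or> (s, r) \<in> E\<^sup>+) \<and> b r = 1
     \<and> ((r \<in> ancestors PA j \<or> r = j) \<and> (k, r) \<in> E\<^sup>+ \<longrightarrow> b k = theta l k * b l)"

lemma repr: "\<exists>b. Prep r b"
proof (induction r rule: wf_induct[OF wfE])
  case (1 r)
  then have "\<forall>m\<in>PA r. \<exists>b. Prep m b" using E_iff by blast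
  then obtain bm where bm: "\<And>m. m \<in> PA r \<Longrightarrow> Prep m (bm m)" by metis
  define b where "b s = (if s = r then 1 else 0) + (\<Sum>m\<in>PA r. theta r m * bm m s)" for s
  have A: "\<forall>\<omega>\<in>space M. X r \<omega> = (\<Sum>s\<in>UNIV. b s * Psi s \<omega>)"
  proof
    fix \<omega> assume w: "\<omega> \<in> space M"
    have xm: "X m \<omega> = (\<Sum>s\<in>UNIV. bm m s * Psi s \<omega>)" if "m \<in> PA r" for m
      using bm[OF that] w unfolding Prep_def by blast
    have e0: "X r \<omega> = Psi r \<omega> + (\<Sum>m\<in>PA r. theta r m * (\<Sum>s\<in>UNIV. bm m s * Psi s \<omega>))"
      using sem[OF w, of r] xm by simp
    have e1: "(\<Sum>m\<in>PA r. theta r m * (\<Sum>s\<in>UNIV. bm m s * Psi s \<omega>)) = (\<Sum>s\<in>UNIV. (\<Sum>m\<in>PA r. theta r m * bm m s) * Psi s \<omega>)"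
      by (simp add: sum_distrib_left sum_distrib_right mult.assoc) (rule sum.swap)
    have e2: "(\<Sum>s\<in>UNIV. (if s = r then 1 else 0) * Psi s \<omega>) = (\<Sum>s\<in>UNIV. if s = r then Psi s \<omega> else 0)"
      by (rule sum.cong) auto
    have e3: "(\<Sum>s\<in>UNIV. b s * Psi s \<omega>) = (\<Sum>s\<in>UNIV. (if s = r then 1 else 0) * Psi s \<omega>) + (\<Sum>s\<in>UNIV. (\<Sum>m\<in>PA r. theta r m * bm m s) * Psi s \<omega>)"
      by (simp add: b_def sum.distrib distrib_right)
    show "X r \<omega> = (\<Sum>s\<in>UNIV. b s * Psi s \<omega>)"
      using e0 e1 e2 e3 by simp
  qed
  have B: "\<forall>s. b s \<noteq> 0 \<longrightarrow> s = r \<or> (s, r) \<in> E\<^sup>+"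
  proof (intro allI impI)
    fix s assume "b s \<noteq> 0"
    show "s = r \<or> (s, r) \<in> E\<^sup>+"
    proof (rule ccontr)
      assume nz: "\<not> (s = r \<or> (s, r) \<in> E\<^sup>+)"
      have "bm m s = 0" if "m \<in> PA r" for m
      proof (rule ccontr)
        assume "bm m s \<noteq> 0"
        then have "s = m \<or> (s, m) \<in> E\<^sup>+" using bm[OF that] by (simp add: Prep_def)
        moreover have "(m, r) \<in> E" using that E_iff by blast
        ultimately show False using nz by (meson trancl.r_into_trancl trancl_into_trancl)
      qed
      then have "b s = 0" using nz by (simp add: b_def)
      with \<open>b s \<noteq> 0\<close> show False by simp
    qed
  qed
  have C: "b r = 1"
  proof -
    have "bm m r = 0" if "m \<in> PA r" for m
    proof (rule ccontr)
      assume "bm m r \<noteq> 0"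
      then have "r = m \<or> (r, m) \<in> E\<^sup>+" using bm[OF that] by (simp add: Prep_def)
      moreover have "(m, r) \<in> E" using that E_iff by blast
      ultimately show False using noloop by (meson trancl.r_into_trancl trancl_into_trancl)
    qed
    then show ?thesis by (simp add: b_def)
  qed
  have D: "b k = theta l k * b l" if rj: "r \<in> ancestors PA j \<or> r = j" and kr: "(k, r) \<in> E\<^sup>+"
  proof -
    have rk: "r \<noteq> k" using kr noloop by blast
    have key: "bm m k = theta l k * bm m l" if m: "m \<in> PA r" "m \<noteq> k" for m
    proof (cases "(k, m) \<in> E\<^sup>+")
      case True
      have mr: "(m, r) \<in> E" using m E_iff by blast
      have "m \<in> ancestors PA j" using rj mr by (auto simp: ancestors_def)
      then show ?thesis using bm[OF m(1)] True by (simp add: Prep_def)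
    next
      case False
      have "bm m k = 0" using bm[OF m(1)] False m(2) by (auto simp: Prep_def)
      moreover have "bm m l = 0"
      proof (rule ccontr)
        assume "bm m l \<noteq> 0"
        then have "l = m \<or> (l, m) \<in> E\<^sup>+" using bm[OF m(1)] by (simp add: Prep_def)
        moreover have "(k, l) \<in> E" using kl E_iff by blast
        ultimately show False using False by (meson trancl.r_into_trancl trancl_into_trancl2)
      qed
      ultimately show ?thesis by simp
    qed
    show ?thesis
    proof (cases "r = l")
      case False
      have nk: "k \<notin> PA r" using l_uniq rj False by blast
      have "b k = (\<Sum>m\<in>PA r. theta r m * bm m k)" using rk by (simp add: b_def)
      also have "\<dots> = (\<Sum>m\<in>PA r. theta l k * (theta r m * bm m l))"
        using key nk by (intro sum.cong) auto
      also have "\<dots> = theta l k * b l" using False by (simp add: b_def sum_distrib_left)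
      finally show ?thesis .
    next
      case True
      have kP: "k \<in> PA l" by (rule kl)
      have fin: "finite (PA l)" by simp
      have bkk: "bm k k = 1" using bm[of k] kP True by (simp add: Prep_def)
      have bkl: "bm k l = 0"
      proof (rule ccontr)
        assume "bm k l \<noteq> 0"
        then have "l = k \<or> (l, k) \<in> E\<^sup>+" using bm[of k] kP True by (simp add: Prep_def)
        moreover have "(k, l) \<in> E" using kl E_iff by blast
        ultimately show False using noloop by (meson trancl.r_into_trancl trancl_into_trancl)
      qed
      define S where "S = (\<Sum>m\<in>PA l - {k}. theta l m * bm m l)"
      have "b k = theta l k * bm k k + (\<Sum>m\<in>PA l - {k}. theta l m * bm m k)"
        using True rk by (simp add: b_def sum.remove[OF fin kP])
      also have "\<dots> = theta l k + theta l k * S"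
        using key True bkk unfolding S_def sum_distrib_left
        by (simp, intro sum.cong) auto
      also have "b l = 1 + theta l k * bm k l + S"
        using True by (simp add: b_def sum.remove[OF fin kP] S_def)
      ultimately show ?thesis using bkl by (simp add: algebra_simps)
    qed
  qed
  show ?case using A B C D unfolding Prep_def by blast
qed

end



lemma (in prob_space) indep_prod_zero:
  fixes U V :: "'a \<Rightarrow> 'c" and u g :: "'c \<Rightarrow> real"
  assumes ind: "indep_var N1 U N2 V" and u: "u \<in> borel_measurable N1"
    and iU: "integrable M (\<lambda>\<omega>. u (U \<omega>))" and eU: "expectation (\<lambda>\<omega>. u (U \<omega>)) = 0"
    and g: "g \<in> borel_measurable N2" and iUg: "integrable M (\<lambda>\<omega>. u (U \<omega>) * g (V \<omega>))"
  shows "expectation (\<lambda>\<omega>. u (U \<omega>) * g (V \<omega>)) = 0"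
proof -
  have rvU: "random_variable N1 U" using ind indep_var_rv1 prob_space_axioms by blast
  have rvV: "random_variable N2 V" using ind indep_var_rv2 prob_space_axioms by blast
  let ?P = "distr M N1 U" and ?Q = "distr M N2 V"
  interpret P: prob_space ?P by (rule prob_space_distr[OF rvU])
  interpret Q: prob_space ?Q by (rule prob_space_distr[OF rvV])
  interpret PQ: pair_prob_space ?P ?Q ..
  have eq: "?P \<Otimes>\<^sub>M ?Q = distr M (N1 \<Otimes>\<^sub>M N2) (\<lambda>x. (U x, V x))"
    using ind indep_var_distribution_eq by blast
  have pm: "(\<lambda>x. (U x, V x)) \<in> measurable M (N1 \<Otimes>\<^sub>M N2)"
    using rvU rvV by (rule measurable_Pair)
  have h: "(\<lambda>(x, y). u x * g y) \<in> borel_measurable (N1 \<Otimes>\<^sub>M N2)"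
    using u g by measurable
  have int: "integrable (?P \<Otimes>\<^sub>M ?Q) (\<lambda>(x, y). u x * g y)"
    unfolding eq using iUg by (simp add: integrable_distr_eq[OF pm h])
  have "expectation (\<lambda>\<omega>. u (U \<omega>) * g (V \<omega>)) = integral\<^sup>L (distr M (N1 \<Otimes>\<^sub>M N2) (\<lambda>x. (U x, V x))) (\<lambda>(x, y). u x * g y)"
    by (simp add: integral_distr[OF pm h])
  also have "\<dots> = integral\<^sup>L (?P \<Otimes>\<^sub>M ?Q) (\<lambda>(x, y). u x * g y)" unfolding eq ..
  also have "\<dots> = (\<integral>y. (\<integral>x. u x * g y \<partial>?P) \<partial>?Q)"
    using PQ.integral_snd[OF int] by simp
  also have "\<dots> = (\<integral>y. (\<integral>x. u x \<partial>?P) * g y \<partial>?Q)" by simp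
  also have "(\<integral>x. u x \<partial>?P) = 0" using eU by (simp add: integral_distr[OF rvU u])
  finally show ?thesis by simp
qed

lemma (in prob_space) indep_vars_reindex:
  fixes Y :: "'i::finite \<Rightarrow> 'a \<Rightarrow> real" and \<pi> :: "'i \<Rightarrow> 'i"
  assumes ind: "indep_vars (\<lambda>_. borel) Y UNIV" and bij: "bij \<pi>"
  shows "indep_vars (\<lambda>_. borel) (\<lambda>i. Y (\<pi> i)) UNIV"
proof -
  have rv: "\<And>i. random_variable borel (Y i)" using ind by (simp add: indep_vars_def)
  have iff: "indep_vars (\<lambda>_. borel) Z (UNIV::'i set) \<longleftrightarrow> (\<forall>A\<in>(\<Pi> i\<in>UNIV. sets borel). prob (\<Inter>j\<in>UNIV. Z j -` A j \<inter> space M) = (\<Prod>j\<in>UNIV. prob (Z j -` A j \<inter> space M)))"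
    if "\<And>i. random_variable borel (Z i)" for Z :: "'i \<Rightarrow> 'a \<Rightarrow> real"
    by (rule indep_vars_finite) (auto simp: that sets.sigma_sets_eq[of borel, simplified] sets.Int_stable)
  have H: "\<forall>A\<in>(\<Pi> i\<in>UNIV. sets borel). prob (\<Inter>j\<in>UNIV. Y j -` A j \<inter> space M) = (\<Prod>j\<in>UNIV. prob (Y j -` A j \<inter> space M))"
    using iff[of Y] rv ind by blast
  have inj: "inj \<pi>" and surj: "surj \<pi>" using bij bij_is_inj bij_is_surj by auto
  have R: "\<forall>A\<in>(\<Pi> i\<in>UNIV. sets borel). prob (\<Inter>j\<in>UNIV. Y (\<pi> j) -` A j \<inter> space M) = (\<Prod>j\<in>UNIV. prob (Y (\<pi> j) -` A j \<inter> space M))"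
    proof
      fix A :: "'i \<Rightarrow> real set" assume A: "A \<in> (\<Pi> i\<in>UNIV. sets borel)"
      define G where "G i = Y i -` A (inv \<pi> i) \<inter> space M" for i
      have Gp: "Y (\<pi> j) -` A j \<inter> space M = G (\<pi> j)" for j
        by (simp add: G_def inv_f_f[OF inj])
      have A': "(\<lambda>i. A (inv \<pi> i)) \<in> (\<Pi> i\<in>UNIV. sets borel)" using A by auto
      have "(\<Inter>j\<in>UNIV. G (\<pi> j)) = \<Inter>(G ` range \<pi>)" by (simp add: image_image)
      also have "\<dots> = (\<Inter>i\<in>UNIV. G i)" using surj by simp
      finally have I: "(\<Inter>j\<in>UNIV. G (\<pi> j)) = (\<Inter>i\<in>UNIV. G i)" .
      have "(\<Prod>j\<in>UNIV. prob (G (\<pi> j))) = (\<Prod>i\<in>range \<pi>. prob (G i))"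
        by (simp add: prod.reindex[OF inj] comp_def)
      also have "\<dots> = (\<Prod>i\<in>UNIV. prob (G i))" using surj by simp
      finally have P: "(\<Prod>j\<in>UNIV. prob (G (\<pi> j))) = (\<Prod>i\<in>UNIV. prob (G i))" .
      show "prob (\<Inter>j\<in>UNIV. Y (\<pi> j) -` A j \<inter> space M) = (\<Prod>j\<in>UNIV. prob (Y (\<pi> j) -` A j \<inter> space M))"
        unfolding Gp I P using bspec[OF H A'] unfolding G_def by simp
    qed
  show ?thesis using iff[of "\<lambda>i. Y (\<pi> i)"] rv R by blast
qed




lemma absprod: fixes a b :: real shows "\<bar>a * b\<bar> \<le> \<bar>a\<^sup>2 + b\<^sup>2\<bar>"
proof -
  have "0 \<le> (\<bar>a\<bar> - \<bar>b\<bar>)\<^sup>2" by simp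
  then have h1: "2 * (\<bar>a\<bar> * \<bar>b\<bar>) \<le> a\<^sup>2 + b\<^sup>2" by (simp add: power2_eq_square algebra_simps)
  have h2: "0 \<le> \<bar>a\<bar> * \<bar>b\<bar>" by simp
  have "\<bar>a\<bar> * \<bar>b\<bar> \<le> a\<^sup>2 + b\<^sup>2" using h1 h2 by linarith
  then show ?thesis by (simp add: abs_mult)
qed

lemma icong: assumes "integrable M g" "\<And>x. x \<in> space M \<Longrightarrow> f x = g x" shows "integrable M f"
  using assms(1) Bochner_Integration.integrable_cong[of M M f g] assms(2) by simp

sublocale sem_setup \<subseteq> prob_space M by (rule ps)

context sem_setup begin

definition B where "B r = (SOME b. Prep r b)"

lemma B: "Prep r (B r)" unfolding B_def using repr by (rule someI_ex)

lemma X_repr: "\<omega> \<in> space M \<Longrightarrow> X r \<omega> = (\<Sum>s\<in>UNIV. B r s * Psi s \<omega>)"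
  using B[of r] unfolding Prep_def by blast

lemma B_supp: "B r s \<noteq> 0 \<Longrightarrow> s = r \<or> (s, r) \<in> E\<^sup>+"
  using B[of r] unfolding Prep_def by blast

lemma B_diag: "B r r = 1"
  using B[of r] unfolding Prep_def by blast

lemma B_kl: "B j k = theta l k * B j l"
  using B[of j] k_anc unfolding Prep_def by (auto simp: ancestors_def)

declare rv[measurable] f_meas[measurable]

lemma X_meas[measurable]: "X r \<in> borel_measurable M"
proof -
  have m: "(\<lambda>\<omega>. \<Sum>s\<in>UNIV. B r s * Psi s \<omega>) \<in> borel_measurable M" by measurable
  show ?thesis using m measurable_cong[of M "X r" "\<lambda>\<omega>. \<Sum>s\<in>UNIV. B r s * Psi s \<omega>" borel] X_repr by blast
qed

definition s2 where "s2 i = (\<integral>\<omega>. (Psi i \<omega>)\<^sup>2 \<partial>M)"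

lemma s2pos: "s2 i > 0"
  using posvar[of i] centered[of i] by (simp add: s2_def)

lemma int_PP: "integrable M (\<lambda>\<omega>. Psi s \<omega> * Psi t \<omega>)"
proof (rule Bochner_Integration.integrable_bound)
  show "integrable M (\<lambda>\<omega>. (Psi s \<omega>)\<^sup>2 + (Psi t \<omega>)\<^sup>2)" using finvar by simp
  show "(\<lambda>\<omega>. Psi s \<omega> * Psi t \<omega>) \<in> borel_measurable M" by measurable
  show "AE x in M. norm (Psi s x * Psi t x) \<le> norm ((Psi s x)\<^sup>2 + (Psi t x)\<^sup>2)"
    using absprod by simp
qed

lemma integral_PP: "(\<integral>\<omega>. Psi s \<omega> * Psi t \<omega> \<partial>M) = (if s = t then s2 s else 0)"
proof (cases "s = t")
  case True then show ?thesis by (simp add: s2_def power2_eq_square)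
next
  case False
  have ind: "indep_vars (\<lambda>_. borel) Psi {s, t}" using indep_vars_subset[OF indep] by simp
  have "(\<integral>\<omega>. (\<Prod>i\<in>{s,t}. Psi i \<omega>) \<partial>M) = (\<Prod>i\<in>{s,t}. \<integral>\<omega>. Psi i \<omega> \<partial>M)"
    by (rule indep_vars_lebesgue_integral) (use ind centered in auto)
  then show ?thesis using False centered by simp
qed

abbreviation Y where "Y \<omega> \<equiv> f (X j \<omega>)"

lemma Psi_eq: "\<omega> \<in> space M \<Longrightarrow> Psi i \<omega> = X i \<omega> - (\<Sum>m\<in>PA i. theta i m * X m \<omega>)"
  using sem[of \<omega> i] by simp

lemma int_PY: "integrable M (\<lambda>\<omega>. Psi i \<omega> * Y \<omega>)"
proof -
  have i: "integrable M (\<lambda>\<omega>. X i \<omega> * Y \<omega> - (\<Sum>m\<in>PA i. theta i m * (X m \<omega> * Y \<omega>)))"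
    by (intro Bochner_Integration.integrable_diff Bochner_Integration.integrable_sum integrable_mult_right beta_exists)
  have eq: "\<And>\<omega>. \<omega> \<in> space M \<Longrightarrow> Psi i \<omega> * Y \<omega> = X i \<omega> * Y \<omega> - (\<Sum>m\<in>PA i. theta i m * (X m \<omega> * Y \<omega>))"
    by (simp add: Psi_eq left_diff_distrib sum_distrib_right mult.assoc)
  show ?thesis using icong[OF i eq] .
qed

lemma int_LZ:
  assumes "\<And>s. integrable M (\<lambda>\<omega>. Psi s \<omega> * Z \<omega>)"
  shows "integrable M (\<lambda>\<omega>. (\<Sum>s\<in>UNIV. p s * Psi s \<omega>) * Z \<omega>)"
    and "(\<integral>\<omega>. (\<Sum>s\<in>UNIV. p s * Psi s \<omega>) * Z \<omega> \<partial>M) = (\<Sum>s\<in>UNIV. p s * (\<integral>\<omega>. Psi s \<omega> * Z \<omega> \<partial>M))"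
proof -
  have e: "(\<lambda>\<omega>. (\<Sum>s\<in>UNIV. p s * Psi s \<omega>) * Z \<omega>) = (\<lambda>\<omega>. \<Sum>s\<in>UNIV. p s * (Psi s \<omega> * Z \<omega>))"
    by (simp add: sum_distrib_right mult.assoc)
  show "integrable M (\<lambda>\<omega>. (\<Sum>s\<in>UNIV. p s * Psi s \<omega>) * Z \<omega>)"
    unfolding e using assms by (intro Bochner_Integration.integrable_sum integrable_mult_right) auto
  show "(\<integral>\<omega>. (\<Sum>s\<in>UNIV. p s * Psi s \<omega>) * Z \<omega> \<partial>M) = (\<Sum>s\<in>UNIV. p s * (\<integral>\<omega>. Psi s \<omega> * Z \<omega> \<partial>M))"
    unfolding e using assms by (subst Bochner_Integration.integral_sum) auto
qed

lemma LL:
  shows "integrable M (\<lambda>\<omega>. (\<Sum>s\<in>UNIV. p s * Psi s \<omega>) * (\<Sum>s\<in>UNIV. q s * Psi s \<omega>))"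
    and "(\<integral>\<omega>. (\<Sum>s\<in>UNIV. p s * Psi s \<omega>) * (\<Sum>s\<in>UNIV. q s * Psi s \<omega>) \<partial>M) = (\<Sum>s\<in>UNIV. p s * q s * s2 s)"
proof -
  have i1: "integrable M (\<lambda>\<omega>. Psi s \<omega> * (\<Sum>t\<in>UNIV. q t * Psi t \<omega>))" for s
    using int_LZ(1)[of "Psi s" q] int_PP by (simp add: mult.commute)
  have e1: "(\<integral>\<omega>. Psi s \<omega> * (\<Sum>t\<in>UNIV. q t * Psi t \<omega>) \<partial>M) = q s * s2 s" for s
  proof -
    have "(\<integral>\<omega>. Psi s \<omega> * (\<Sum>t\<in>UNIV. q t * Psi t \<omega>) \<partial>M) = (\<integral>\<omega>. (\<Sum>t\<in>UNIV. q t * Psi t \<omega>) * Psi s \<omega> \<partial>M)"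
      by (simp add: mult.commute)
    also have "\<dots> = (\<Sum>t\<in>UNIV. q t * (\<integral>\<omega>. Psi t \<omega> * Psi s \<omega> \<partial>M))"
      using int_LZ(2)[of "Psi s" q] int_PP by simp
    also have "\<dots> = (\<Sum>t\<in>UNIV. if t = s then q s * s2 s else 0)"
      by (intro sum.cong) (auto simp: integral_PP)
    finally show ?thesis by simp
  qed
  show "integrable M (\<lambda>\<omega>. (\<Sum>s\<in>UNIV. p s * Psi s \<omega>) * (\<Sum>s\<in>UNIV. q s * Psi s \<omega>))"
    using int_LZ(1)[OF i1] .
  show "(\<integral>\<omega>. (\<Sum>s\<in>UNIV. p s * Psi s \<omega>) * (\<Sum>s\<in>UNIV. q s * Psi s \<omega>) \<partial>M) = (\<Sum>s\<in>UNIV. p s * q s * s2 s)"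
    using int_LZ(2)[OF i1] e1 by (simp add: mult.assoc)
qed

end



context sem_setup begin

definition gam where "gam i = (\<integral>\<omega>. Psi i \<omega> * Y \<omega> \<partial>M)"
definition aa where "aa i = gam i / s2 i"
definition vv where "vv q = aa q - (\<Sum>i\<in>children PA q. theta i q * aa i)"

lemma Id: "\<omega> \<in> space M \<Longrightarrow> (\<Sum>q\<in>UNIV. (p q - (\<Sum>i\<in>children PA q. theta i q * p i)) * X q \<omega>) = (\<Sum>i\<in>UNIV. p i * Psi i \<omega>)"
proof -
  assume w: "\<omega> \<in> space M"
  have sw: "(\<Sum>q\<in>UNIV. \<Sum>i\<in>{i\<in>UNIV. q \<in> PA i}. theta i q * p i * X q \<omega>) = (\<Sum>i\<in>UNIV. \<Sum>q | q \<in> UNIV \<and> q \<in> PA i. theta i q * p i * X q \<omega>)"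
    by (rule sum.swap_restrict) auto
  have "(\<Sum>i\<in>UNIV. p i * Psi i \<omega>) = (\<Sum>i\<in>UNIV. p i * X i \<omega> - (\<Sum>q\<in>PA i. theta i q * p i * X q \<omega>))"
    using w by (intro sum.cong) (auto simp: Psi_eq right_diff_distrib sum_distrib_left mult_ac)
  also have "\<dots> = (\<Sum>i\<in>UNIV. p i * X i \<omega>) - (\<Sum>i\<in>UNIV. \<Sum>q\<in>PA i. theta i q * p i * X q \<omega>)"
    by (simp add: sum_subtractf)
  also have "(\<Sum>i\<in>UNIV. \<Sum>q\<in>PA i. theta i q * p i * X q \<omega>) = (\<Sum>q\<in>UNIV. \<Sum>i\<in>children PA q. theta i q * p i * X q \<omega>)"
    using sw by (simp add: children_def)
  finally show ?thesis
    by (simp add: left_diff_distrib sum_subtractf sum_distrib_right)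
qed

lemma int_XZ:
  assumes "\<And>s. integrable M (\<lambda>\<omega>. Psi s \<omega> * Z \<omega>)"
  shows "integrable M (\<lambda>\<omega>. X r \<omega> * Z \<omega>)"
    and "(\<integral>\<omega>. X r \<omega> * Z \<omega> \<partial>M) = (\<Sum>s\<in>UNIV. B r s * (\<integral>\<omega>. Psi s \<omega> * Z \<omega> \<partial>M))"
proof -
  have eq: "\<And>\<omega>. \<omega> \<in> space M \<Longrightarrow> X r \<omega> * Z \<omega> = (\<Sum>s\<in>UNIV. B r s * Psi s \<omega>) * Z \<omega>"
    by (simp add: X_repr)
  show "integrable M (\<lambda>\<omega>. X r \<omega> * Z \<omega>)" by (rule icong[OF int_LZ(1)[OF assms] eq])
  have "(\<integral>\<omega>. X r \<omega> * Z \<omega> \<partial>M) = (\<integral>\<omega>. (\<Sum>s\<in>UNIV. B r s * Psi s \<omega>) * Z \<omega> \<partial>M)"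
    using eq by (intro Bochner_Integration.integral_cong) auto
  then show "(\<integral>\<omega>. X r \<omega> * Z \<omega> \<partial>M) = (\<Sum>s\<in>UNIV. B r s * (\<integral>\<omega>. Psi s \<omega> * Z \<omega> \<partial>M))"
    using int_LZ(2)[OF assms] by simp
qed

lemma int_XX:
  shows "integrable M (\<lambda>\<omega>. X r \<omega> * X q \<omega>)"
    and "(\<integral>\<omega>. X r \<omega> * X q \<omega> \<partial>M) = (\<Sum>s\<in>UNIV. B r s * B q s * s2 s)"
proof -
  have eq: "\<And>\<omega>. \<omega> \<in> space M \<Longrightarrow> X r \<omega> * X q \<omega> = (\<Sum>s\<in>UNIV. B r s * Psi s \<omega>) * (\<Sum>s\<in>UNIV. B q s * Psi s \<omega>)"
    by (simp add: X_repr)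
  show "integrable M (\<lambda>\<omega>. X r \<omega> * X q \<omega>)" by (rule icong[OF LL(1) eq])
  have "(\<integral>\<omega>. X r \<omega> * X q \<omega> \<partial>M) = (\<integral>\<omega>. (\<Sum>s\<in>UNIV. B r s * Psi s \<omega>) * (\<Sum>s\<in>UNIV. B q s * Psi s \<omega>) \<partial>M)"
    using eq by (intro Bochner_Integration.integral_cong) auto
  then show "(\<integral>\<omega>. X r \<omega> * X q \<omega> \<partial>M) = (\<Sum>s\<in>UNIV. B r s * B q s * s2 s)"
    using LL(2) by simp
qed

lemma int_XY: "(\<integral>\<omega>. X r \<omega> * Y \<omega> \<partial>M) = (\<Sum>s\<in>UNIV. B r s * gam s)"
  using int_XZ(2)[OF int_PY] by (simp add: gam_def)

lemma Gv: "second_moment M X *v (\<chi> q. vv q) = (\<chi> i. \<integral>\<omega>. X i \<omega> * Y \<omega> \<partial>M)"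
proof (rule vec_eq_iff[THEN iffD2], rule allI)
  fix r
  have "(second_moment M X *v (\<chi> q. vv q)) $ r = (\<Sum>q\<in>UNIV. (\<integral>\<omega>. X r \<omega> * X q \<omega> \<partial>M) * vv q)"
    by (simp add: matrix_vector_mult_def second_moment_def)
  also have "\<dots> = (\<integral>\<omega>. (\<Sum>q\<in>UNIV. X r \<omega> * X q \<omega> * vv q) \<partial>M)"
    using int_XX(1) by (subst Bochner_Integration.integral_sum) auto
  also have "\<dots> = (\<integral>\<omega>. (\<Sum>s\<in>UNIV. B r s * Psi s \<omega>) * (\<Sum>s\<in>UNIV. aa s * Psi s \<omega>) \<partial>M)"
  proof (intro Bochner_Integration.integral_cong refl)
    fix \<omega> assume w: "\<omega> \<in> space M"
    have "(\<Sum>q\<in>UNIV. X r \<omega> * X q \<omega> * vv q) = X r \<omega> * (\<Sum>q\<in>UNIV. vv q * X q \<omega>)"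
      by (simp add: sum_distrib_left mult_ac)
    also have "(\<Sum>q\<in>UNIV. vv q * X q \<omega>) = (\<Sum>s\<in>UNIV. aa s * Psi s \<omega>)"
      unfolding vv_def by (rule Id[OF w])
    finally show "(\<Sum>q\<in>UNIV. X r \<omega> * X q \<omega> * vv q) = (\<Sum>s\<in>UNIV. B r s * Psi s \<omega>) * (\<Sum>s\<in>UNIV. aa s * Psi s \<omega>)"
      using X_repr[OF w] by simp
  qed
  also have "\<dots> = (\<Sum>s\<in>UNIV. B r s * aa s * s2 s)" by (rule LL(2))
  also have "\<dots> = (\<Sum>s\<in>UNIV. B r s * gam s)"
    using s2pos by (intro sum.cong) (auto simp: aa_def less_imp_neq[symmetric])
  also have "\<dots> = (\<chi> i. \<integral>\<omega>. X i \<omega> * Y \<omega> \<partial>M) $ r" by (simp add: int_XY)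
  finally show "(second_moment M X *v (\<chi> q. vv q)) $ r = (\<chi> i. \<integral>\<omega>. X i \<omega> * Y \<omega> \<partial>M) $ r" .
qed

lemma tri1: assumes "\<And>r. (\<Sum>s\<in>UNIV. B r s * d s) = 0" shows "d r = 0"
proof (induction r rule: wf_induct[OF wf_trancl[OF wfE]])
  case (1 r)
  have "(\<Sum>s\<in>UNIV. B r s * d s) = (\<Sum>s\<in>UNIV. if s = r then d r else 0)"
  proof (intro sum.cong refl)
    fix s show "B r s * d s = (if s = r then d r else 0)"
      using 1 B_supp[of r s] B_diag[of r] by auto
  qed
  then show ?case using assms[of r] by simp
qed

lemma tri2: assumes "\<And>s. (\<Sum>q\<in>UNIV. w q * B q s) = 0" shows "w s = 0"
proof (induction s rule: wf_induct[OF wf_trancl[OF wfE']])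
  case (1 s)
  have "(\<Sum>q\<in>UNIV. w q * B q s) = (\<Sum>q\<in>UNIV. if q = s then w s else 0)"
  proof (intro sum.cong refl)
    fix q show "w q * B q s = (if q = s then w s else 0)"
      using 1 B_supp[of q s] B_diag[of s] by (auto simp: trancl_converse)
  qed
  then show ?case using assms[of s] by simp
qed

lemma G_inj: assumes "second_moment M X *v w = 0" shows "w = 0"
proof -
  define c where "c s = (\<Sum>q\<in>UNIV. w $ q * B q s)" for s
  have "(\<Sum>s\<in>UNIV. B r s * (s2 s * c s)) = 0" for r
  proof -
    have "0 = (second_moment M X *v w) $ r" using assms by simp
    also have "\<dots> = (\<Sum>q\<in>UNIV. (\<Sum>s\<in>UNIV. B r s * B q s * s2 s) * w $ q)"
      by (simp add: matrix_vector_mult_def second_moment_def int_XX(2))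
    also have "\<dots> = (\<Sum>s\<in>UNIV. B r s * (s2 s * c s))"
      unfolding c_def by (simp add: sum_distrib_left sum_distrib_right mult_ac) (rule sum.swap)
    finally show ?thesis by simp
  qed
  then have sc: "s2 s * c s = 0" for s by (rule tri1)
  have "c s = 0" for s using sc[of s] s2pos[of s] by simp
  then have "w $ q = 0" for q unfolding c_def by (rule tri2)
  then show ?thesis by (simp add: vec_eq_iff)
qed

lemma beta_vv: "beta_coef M X f j = (\<chi> q. vv q)"
proof -
  let ?G = "second_moment M X"
  obtain A' where A': "A' ** ?G = mat 1" using matrix_left_invertible_ker[of ?G] G_inj by blast
  then have "?G ** A' = mat 1" using matrix_left_right_inverse by blast
  then have "\<exists>A'. ?G ** A' = mat 1 \<and> A' ** ?G = mat 1" using A' by blast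
  then have inv: "matrix_inv ?G ** ?G = mat 1" unfolding matrix_inv_def by (rule someI2_ex) blast
  have "beta_coef M X f j = matrix_inv ?G *v (?G *v (\<chi> q. vv q))"
    unfolding beta_coef_def Gv ..
  also have "\<dots> = (\<chi> q. vv q)" by (simp add: matrix_vector_mul_assoc inv)
  finally show ?thesis .
qed

end



context sem_setup begin

lemma gam_zero: assumes Bji: "B j i = 0" shows "gam i = 0"
proof -
  have ind: "indep_var (PiM {i} (\<lambda>_. borel)) (\<lambda>\<omega>. restrict (\<lambda>s. Psi s \<omega>) {i}) (PiM (-{i}) (\<lambda>_. borel)) (\<lambda>\<omega>. restrict (\<lambda>s. Psi s \<omega>) (-{i}))"
    using indep_var_restrict[OF indep, of "{i}" "-{i}"] by auto
  have u: "(\<lambda>x. x i) \<in> borel_measurable (PiM {i} (\<lambda>_. borel))"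
    by (rule measurable_component_singleton) simp
  define g where "g x = f (\<Sum>s\<in>-{i}. B j s * x s)" for x :: "'n \<Rightarrow> real"
  have g: "g \<in> borel_measurable (PiM (-{i}) (\<lambda>_. borel))" unfolding g_def by measurable
  have gV: "g (restrict (\<lambda>s. Psi s \<omega>) (-{i})) = Y \<omega>" if w: "\<omega> \<in> space M" for \<omega>
  proof -
    have "(\<Sum>s\<in>UNIV. B j s * Psi s \<omega>) = B j i * Psi i \<omega> + (\<Sum>s\<in>UNIV - {i}. B j s * Psi s \<omega>)"
      by (rule sum.remove) auto
    also have "UNIV - {i} = -{i}" by auto
    finally have "X j \<omega> = (\<Sum>s\<in>-{i}. B j s * Psi s \<omega>)" using X_repr[OF w] Bji by simp
    then show ?thesis unfolding g_def by simp
  qed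
  have E0: "expectation (\<lambda>\<omega>. restrict (\<lambda>s. Psi s \<omega>) {i} i * g (restrict (\<lambda>s. Psi s \<omega>) (-{i}))) = 0"
  proof (rule indep_prod_zero[OF ind u _ _ g])
    show "integrable M (\<lambda>\<omega>. restrict (\<lambda>s. Psi s \<omega>) {i} i)" using centered by simp
    show "expectation (\<lambda>\<omega>. restrict (\<lambda>s. Psi s \<omega>) {i} i) = 0" using centered by simp
    show "integrable M (\<lambda>\<omega>. restrict (\<lambda>s. Psi s \<omega>) {i} i * g (restrict (\<lambda>s. Psi s \<omega>) (-{i})))"
      by (rule icong[OF int_PY[of i]]) (simp add: gV)
  qed
  have "gam i = expectation (\<lambda>\<omega>. restrict (\<lambda>s. Psi s \<omega>) {i} i * g (restrict (\<lambda>s. Psi s \<omega>) (-{i})))"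
    unfolding gam_def by (intro Bochner_Integration.integral_cong) (auto simp: gV)
  then show ?thesis using E0 by simp
qed

lemma s2_lk: "s2 l = (theta l k)\<^sup>2 * s2 k"
proof -
  have m: "(\<lambda>\<omega>. theta l k * Psi k \<omega>) \<in> borel_measurable M" by measurable
  have p2: "(\<lambda>x::real. x\<^sup>2) \<in> borel_measurable borel" by measurable
  have "s2 l = integral\<^sup>L (distr M borel (Psi l)) (\<lambda>x. x\<^sup>2)"
    unfolding s2_def by (rule integral_distr[OF rv p2, symmetric])
  also have "\<dots> = integral\<^sup>L (distr M borel (\<lambda>\<omega>. theta l k * Psi k \<omega>)) (\<lambda>x. x\<^sup>2)"
    by (simp add: same_dist)
  also have "\<dots> = (\<integral>\<omega>. (theta l k * Psi k \<omega>)\<^sup>2 \<partial>M)"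
    by (rule integral_distr[OF m p2])
  also have "\<dots> = (theta l k)\<^sup>2 * s2 k" by (simp add: s2_def power_mult_distrib)
  finally show ?thesis .
qed

lemma theta_nz: "theta l k \<noteq> 0"
  using s2_lk s2pos[of l] by auto

lemma exch: "gam l = theta l k * gam k"
proof -
  define \<theta> where "\<theta> = theta l k"
  have tnz: "\<theta> \<noteq> 0" using theta_nz by (simp add: \<theta>_def)
  define \<pi> where "\<pi> i = (if i = k then l else if i = l then k else i)" for i
  define h where "h i = (if i = l then (\<lambda>x::real. \<theta> * x) else if i = k then (\<lambda>x. x / \<theta>) else (\<lambda>x. x))" for i
  define Q where "Q = (\<lambda>i \<omega>. h i (Psi (\<pi> i) \<omega>))"
  have bij: "bij \<pi>" by (rule o_bij[of \<pi> \<pi>]) (use k_ne_l in \<open>auto simp: \<pi>_def fun_eq_iff\<close>)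
  have h1: "(\<lambda>x::real. \<theta> * x) \<in> borel_measurable borel" by measurable
  have h2: "(\<lambda>x::real. x / \<theta>) \<in> borel_measurable borel" by measurable
  have h3: "(\<lambda>x::real. x) \<in> borel_measurable borel" by measurable
  have hm: "h i \<in> borel_measurable borel" for i
  proof (cases "i = l")
    case True then have "h i = (\<lambda>x. \<theta> * x)" by (simp add: h_def)
    with h1 show ?thesis by (simp only:)
  next
    case False
    show ?thesis
    proof (cases "i = k")
      case True then have "h i = (\<lambda>x. x / \<theta>)" using \<open>i \<noteq> l\<close> by (simp add: h_def)
      with h2 show ?thesis by (simp only:)
    next
      case False then have "h i = (\<lambda>x. x)" using \<open>i \<noteq> l\<close> by (simp add: h_def)
      with h3 show ?thesis by (simp only:)
    qed
  qed
  have indQ: "indep_vars (\<lambda>_. borel) Q UNIV"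
    unfolding Q_def using indep_vars_compose2[OF indep_vars_reindex[OF indep bij] hm] by simp
  have Ql: "Q l = (\<lambda>\<omega>. \<theta> * Psi k \<omega>)" using k_ne_l by (auto simp: Q_def h_def \<pi>_def fun_eq_iff)
  have Qk: "Q k = (\<lambda>\<omega>. Psi l \<omega> / \<theta>)" using k_ne_l by (auto simp: Q_def h_def \<pi>_def fun_eq_iff)
  have Qo: "i \<noteq> k \<Longrightarrow> i \<noteq> l \<Longrightarrow> Q i = Psi i" for i by (auto simp: Q_def h_def \<pi>_def fun_eq_iff)
  have rvQ: "random_variable borel (Q i)" for i
    unfolding Q_def by (rule measurable_compose[OF rv hm])
  have marg: "distr M borel (Q i) = distr M borel (Psi i)" for i
  proof -
    consider "i = l" | "i = k" | "i \<noteq> k" "i \<noteq> l" by blast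
    then show ?thesis
    proof cases
      case 1 then show ?thesis using Ql same_dist by (simp add: \<theta>_def)
    next
      case 2
      have "distr M borel (Q k) = distr M borel ((\<lambda>x. x / \<theta>) \<circ> Psi l)" by (simp add: Qk comp_def)
      also have "\<dots> = distr (distr M borel (Psi l)) borel (\<lambda>x. x / \<theta>)" by (rule distr_distr[OF h2 rv, symmetric])
      also have "\<dots> = distr (distr M borel (\<lambda>\<omega>. \<theta> * Psi k \<omega>)) borel (\<lambda>x. x / \<theta>)" by (simp add: same_dist \<theta>_def)
      also have "\<dots> = distr M borel ((\<lambda>x. x / \<theta>) \<circ> (\<lambda>\<omega>. \<theta> * Psi k \<omega>))"
        by (rule distr_distr[OF h2]) measurable
      also have "(\<lambda>x. x / \<theta>) \<circ> (\<lambda>\<omega>. \<theta> * Psi k \<omega>) = Psi k" using tnz by (simp add: fun_eq_iff comp_def)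
      finally show ?thesis using 2 by simp
    next
      case 3 then show ?thesis by (simp add: Qo)
    qed
  qed
  have DP: "distr M (PiM UNIV (\<lambda>_. borel)) (\<lambda>\<omega>. \<lambda>i\<in>UNIV. Psi i \<omega>) = PiM UNIV (\<lambda>i. distr M borel (Psi i))"
    by (rule indep_vars_iff_distr_eq_PiM[THEN iffD1, OF _ rv indep]) simp
  have DQ: "distr M (PiM UNIV (\<lambda>_. borel)) (\<lambda>\<omega>. \<lambda>i\<in>UNIV. Q i \<omega>) = PiM UNIV (\<lambda>i. distr M borel (Q i))"
    by (rule indep_vars_iff_distr_eq_PiM[THEN iffD1, OF _ rvQ indQ]) simp
  have DD: "distr M (PiM UNIV (\<lambda>_. borel)) (\<lambda>\<omega>. \<lambda>i\<in>UNIV. Psi i \<omega>) = distr M (PiM UNIV (\<lambda>_. borel)) (\<lambda>\<omega>. \<lambda>i\<in>UNIV. Q i \<omega>)"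
    unfolding DP DQ marg ..
  define F where "F x = x l * f (\<Sum>s\<in>UNIV. B j s * x s)" for x :: "'n \<Rightarrow> real"
  have Fm: "F \<in> borel_measurable (PiM UNIV (\<lambda>_. borel))" unfolding F_def by measurable
  have pm: "(\<lambda>\<omega>. \<lambda>i\<in>UNIV. Psi i \<omega>) \<in> measurable M (PiM UNIV (\<lambda>_. borel))"
    by (rule measurable_restrict) (rule rv)
  have qm: "(\<lambda>\<omega>. \<lambda>i\<in>UNIV. Q i \<omega>) \<in> measurable M (PiM UNIV (\<lambda>_. borel))"
    by (rule measurable_restrict) (rule rvQ)
  have II: "(\<integral>\<omega>. F (\<lambda>i\<in>UNIV. Psi i \<omega>) \<partial>M) = (\<integral>\<omega>. F (\<lambda>i\<in>UNIV. Q i \<omega>) \<partial>M)"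
    using integral_distr[OF pm Fm] integral_distr[OF qm Fm] DD by simp
  have sumQ: "(\<Sum>s\<in>UNIV. B j s * Q s \<omega>) = (\<Sum>s\<in>UNIV. B j s * Psi s \<omega>)" for \<omega>
  proof -
    have split: "(\<Sum>s\<in>UNIV. g s) = g k + (g l + (\<Sum>s\<in>UNIV - {k} - {l}. g s))" for g :: "'n \<Rightarrow> real"
    proof -
      have "(\<Sum>s\<in>UNIV. g s) = g k + (\<Sum>s\<in>UNIV - {k}. g s)" by (rule sum.remove) auto
      also have "(\<Sum>s\<in>UNIV - {k}. g s) = g l + (\<Sum>s\<in>UNIV - {k} - {l}. g s)"
        using k_ne_l by (intro sum.remove) auto
      finally show ?thesis .
    qed
    have rest: "(\<Sum>s\<in>UNIV - {k} - {l}. B j s * Q s \<omega>) = (\<Sum>s\<in>UNIV - {k} - {l}. B j s * Psi s \<omega>)"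
      by (intro sum.cong) (auto simp: Qo)
    have "B j k * Q k \<omega> + B j l * Q l \<omega> = B j k * Psi k \<omega> + B j l * Psi l \<omega>"
      using tnz B_kl by (simp add: Qk Ql \<theta>_def field_simps)
    then show ?thesis using split[of "\<lambda>s. B j s * Q s \<omega>"] split[of "\<lambda>s. B j s * Psi s \<omega>"] rest by simp
  qed
  have "gam l = (\<integral>\<omega>. F (\<lambda>i\<in>UNIV. Psi i \<omega>) \<partial>M)"
    unfolding gam_def F_def by (intro Bochner_Integration.integral_cong) (auto simp: X_repr)
  also have "\<dots> = (\<integral>\<omega>. F (\<lambda>i\<in>UNIV. Q i \<omega>) \<partial>M)" by (rule II)
  also have "\<dots> = (\<integral>\<omega>. \<theta> * (Psi k \<omega> * Y \<omega>) \<partial>M)"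
    unfolding F_def by (intro Bochner_Integration.integral_cong) (auto simp: X_repr sumQ Ql)
  also have "\<dots> = theta l k * gam k" by (simp add: gam_def \<theta>_def)
  finally show ?thesis .
qed

lemma main: "beta_coef M X f j $ k = 0"
proof -
  have ch0: "aa i = 0" if i: "i \<in> children PA k" "i \<noteq> l" for i
  proof -
    have "B j i = 0"
    proof (rule ccontr)
      assume "B j i \<noteq> 0"
      then have "i = j \<or> (i, j) \<in> E\<^sup>+" by (rule B_supp)
      then have "i \<in> ancestors PA j \<or> i = j" by (auto simp: ancestors_def)
      moreover have "k \<in> PA i" using i by (simp add: children_def)
      ultimately show False using l_uniq i by blast
    qed
    then show ?thesis by (simp add: aa_def gam_zero)
  qed
  have lch: "l \<in> children PA k" using kl by (simp add: children_def)
  have "(\<Sum>i\<in>children PA k. theta i k * aa i) = theta l k * aa l + (\<Sum>i\<in>children PA k - {l}. theta i k * aa i)"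
    by (rule sum.remove[OF _ lch]) simp
  also have "(\<Sum>i\<in>children PA k - {l}. theta i k * aa i) = 0"
    using ch0 by (intro sum.neutral) auto
  finally have S: "(\<Sum>i\<in>children PA k. theta i k * aa i) = theta l k * aa l" by simp
  have "theta l k * aa l = aa k"
    using exch s2_lk theta_nz s2pos[of k] by (simp add: aa_def power2_eq_square field_simps)
  then have "vv k = 0" unfolding vv_def S by simp
  then show ?thesis by (simp add: beta_vv)
qed

end


theorem proposition2:
  fixes M :: "'a measure"
    and Psi X :: "'n::finite \<Rightarrow> 'a \<Rightarrow> real"
    and PA :: "'n \<Rightarrow> 'n set"
    and theta :: "'n \<Rightarrow> 'n \<Rightarrow> real"
    and f :: "real \<Rightarrow> real"
    and j k l :: 'n
  assumes "prob_space M"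
    and rv: "\<And>i. Psi i \<in> borel_measurable M"
    and indep: "prob_space.indep_vars M (\<lambda>_. borel) Psi UNIV"
    and centered: "\<And>i. integrable M (Psi i) \<and> integral\<^sup>L M (Psi i) = 0"
    and finvar: "\<And>i. integrable M (\<lambda>\<omega>. (Psi i \<omega>)\<^sup>2)"
    and posvar: "\<And>i. prob_space.variance M (Psi i) > 0"
    and dag: "acyclic (dag_edges PA)"
    and sem: "\<And>i \<omega>. \<omega> \<in> space M \<Longrightarrow>
               X i \<omega> = Psi i \<omega> + (\<Sum>m\<in>PA i. theta i m * X m \<omega>)"
    and f_meas: "f \<in> borel_measurable borel"
    and beta_exists: "\<And>i. integrable M (\<lambda>\<omega>. X i \<omega> * f (X j \<omega>))"
    and k_anc: "k \<in> ancestors PA j"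
    and ch: "children_to PA j k = {l}"
    and same_dist: "distr M borel (Psi l) = distr M borel (\<lambda>\<omega>. theta l k * Psi k \<omega>)"
  shows "beta_coef M X f j $ k = 0"
proof -
  interpret S: sem_setup M Psi X PA theta f j k l
    by (rule sem_setup.intro) (use assms in blast)+
  show ?thesis by (rule S.main)
qed

end
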